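(* Let $C_1,C_2$ be two vertex-disjoint cycles in a graph, and let $P_1,P_2$ be two vertex-disjoint paths from $C_1$ to $C_2$, where $P_i$ has end-vertices $x_i\in V(C_1)$ and $y_i\in V(C_2)$ for $i=1,2$. If $x_1,x_2$ are mod-non-diagonal in $C_1$ and $y_1,y_2$ are mod-non-diagonal in $C_2$, then $C_1\cup C_2\cup P_1\cup P_2$ contains a cycle of length congruent to $1$ modulo $3$.
   Context: A path from a subgraph $X$ to a subgraph $Y$ is a path whose origin lies in $X$, whose terminus lies in $Y$, and all of whose internal vertices lie outside $X\cup Y$. For a cycle $C$ with an orientation, $\overrightarrow{C}[u,v]$ is the path from $u$ to $v$ along the orientation; two distinct vertices $u,v$ of $C$ are mod-diagonal in $C$ if $|\overrightarrow{C}[u,v]|\equiv|\overrightarrow{C}[v,u]|\pmod 3$ (lengths counted in edges), and mod-non-diagonal otherwise (this does not depend on the chosen orientation). *)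

theory Defs
  imports Main
begin

text \<open>A cycle is a list of at least 3 distinct
  vertices, consecutive ones adjacent and the last adjacent to the first;
  its length (number of edges) is the length of the list.\<close>

definition simple_graph :: "'a set set \<Rightarrow> bool" where
  "simple_graph E \<longleftrightarrow> (\<forall>e\<in>E. card e = 2)"

definition path_edges :: "'a list \<Rightarrow> 'a set set" where
  "path_edges xs = {{xs ! i, xs ! Suc i} | i. Suc i < length xs}"

definition cycle_edges :: "'a list \<Rightarrow> 'a set set" where
  "cycle_edges xs = path_edges xs \<union> {{last xs, hd xs}}"

definition is_path :: "'a set set \<Rightarrow> 'a list \<Rightarrow> bool" where
  "is_path E xs \<longleftrightarrow> xs \<noteq> [] \<and> distinct xs \<and> path_edges xs \<subseteq> E"

definition is_cycle :: "'a set set \<Rightarrow> 'a list \<Rightarrow> bool" where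
  "is_cycle E xs \<longleftrightarrow> length xs \<ge> 3 \<and> distinct xs \<and> cycle_edges xs \<subseteq> E"

definition path_from_to :: "'a set set \<Rightarrow> 'a list \<Rightarrow> 'a set \<Rightarrow> 'a set \<Rightarrow> bool" where
  "path_from_to E P X Y \<longleftrightarrow> is_path E P \<and> hd P \<in> X \<and> last P \<in> Y \<and>
     (\<forall>i. 0 < i \<and> i < length P - 1 \<longrightarrow> P ! i \<notin> X \<union> Y)"

definition pos :: "'a list \<Rightarrow> 'a \<Rightarrow> nat" where
  "pos C u = (THE i. i < length C \<and> C ! i = u)"

text \<open>Length of the oriented subpath C[u,v] of the cycle C (oriented along the list).\<close>
definition cyc_dist :: "'a list \<Rightarrow> 'a \<Rightarrow> 'a \<Rightarrow> int" where
  "cyc_dist C u v = (int (pos C v) - int (pos C u)) mod int (length C)"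

definition mod_diagonal :: "'a list \<Rightarrow> 'a \<Rightarrow> 'a \<Rightarrow> bool" where
  "mod_diagonal C u v \<longleftrightarrow> u \<in> set C \<and> v \<in> set C \<and> u \<noteq> v \<and>
     cyc_dist C u v mod 3 = cyc_dist C v u mod 3"

definition mod_non_diagonal :: "'a list \<Rightarrow> 'a \<Rightarrow> 'a \<Rightarrow> bool" where
  "mod_non_diagonal C u v \<longleftrightarrow> u \<in> set C \<and> v \<in> set C \<and> u \<noteq> v \<and>
     \<not> cyc_dist C u v mod 3 = cyc_dist C v u mod 3"

end

theory Submission imports Defs begin

lemma pe_Nil[simp]: "path_edges [] = {}" by (simp add: path_edges_def)
lemma pe_single[simp]: "path_edges [x] = {}" by (simp add: path_edges_def)
lemma pe_Cons2[simp]: "path_edges (x#y#xs) = insert {x,y} (path_edges (y#xs))"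
proof (rule set_eqI, rule iffI)
  fix e assume "e \<in> path_edges (x#y#xs)"
  then obtain i where i: "e = {(x#y#xs) ! i, (x#y#xs) ! Suc i}" "Suc i < length (x#y#xs)"
    unfolding path_edges_def by blast
  show "e \<in> insert {x,y} (path_edges (y#xs))"
  proof (cases i)
    case 0 then show ?thesis using i by simp
  next
    case (Suc j)
    then have "e = {(y#xs) ! j, (y#xs) ! Suc j}" "Suc j < length (y#xs)" using i by simp_all
    then show ?thesis unfolding path_edges_def by blast
  qed
next
  fix e assume "e \<in> insert {x,y} (path_edges (y#xs))"
  then consider "e = {x,y}" | j where "e = {(y#xs) ! j, (y#xs) ! Suc j}" "Suc j < length (y#xs)"
    unfolding path_edges_def by blast
  then show "e \<in> path_edges (x#y#xs)"
  proof cases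
    case 1
    have "e = {(x#y#xs) ! 0, (x#y#xs) ! Suc 0}" "Suc 0 < length (x#y#xs)" using 1 by simp_all
    then show ?thesis unfolding path_edges_def by blast
  next
    case (2 j)
    have "e = {(x#y#xs) ! Suc j, (x#y#xs) ! Suc (Suc j)}" "Suc (Suc j) < length (x#y#xs)" using 2 by simp_all
    then show ?thesis unfolding path_edges_def by blast
  qed
qed

lemma pe_append: "xs \<noteq> [] \<Longrightarrow> ys \<noteq> [] \<Longrightarrow>
  path_edges (xs @ ys) = path_edges xs \<union> path_edges ys \<union> {{last xs, hd ys}}"
proof (induction xs rule: induct_list012)
  case (2 x)
  then show ?case by (cases ys rule: list.exhaust) auto
next
  case (3 x y zs)
  then show ?case by auto
qed simp

lemma pe_rev[simp]: "path_edges (rev xs) = path_edges xs"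
proof (induction xs)
  case (Cons x xs)
  show ?case
  proof (cases xs)
    case Nil then show ?thesis by simp
  next
    case (Cons a as)
    then have "path_edges (rev (x#xs)) = path_edges xs \<union> {{a, x}}"
      using Cons.IH pe_append[of "rev xs" "[x]"] by (simp add: last_rev)
    then show ?thesis using Cons by (auto simp: insert_commute)
  qed
qed simp

lemma pe_take: "path_edges (take n xs) \<subseteq> path_edges xs"
  unfolding path_edges_def by auto

lemma ce_rotate1: "cycle_edges (rotate1 xs) = cycle_edges xs"
proof (cases xs)
  case (Cons x ys)
  show ?thesis
  proof (cases ys)
    case Nil then show ?thesis using Cons by simp
  next
    case (Cons a as)
    have "cycle_edges (rotate1 xs) = path_edges ys \<union> {{last ys, x}} \<union> {{x, a}}"
      using Cons \<open>xs = x # ys\<close> pe_append[of ys "[x]"] by (simp add: cycle_edges_def)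
    moreover have "cycle_edges xs = insert {x,a} (path_edges ys) \<union> {{last ys, x}}"
      using Cons \<open>xs = x # ys\<close> by (simp add: cycle_edges_def)
    ultimately show ?thesis by auto
  qed
qed simp

lemma ce_rotate: "cycle_edges (rotate n xs) = cycle_edges xs"
  by (induction n) (simp_all add: ce_rotate1)

lemma pe_sub_ce: "path_edges xs \<subseteq> cycle_edges xs" by (auto simp: cycle_edges_def)

lemma pe_join: "ys \<noteq> [] \<Longrightarrow> xs \<noteq> [] \<Longrightarrow> hd ys = last xs \<Longrightarrow>
   path_edges (xs @ tl ys) = path_edges xs \<union> path_edges ys"
proof (cases ys)
  case (Cons a as)
  assume h: "xs \<noteq> []" "hd ys = last xs"
  show ?thesis
  proof (cases as)
    case Nil then show ?thesis using Cons by simp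
  next
    case (Cons b bs)
    then show ?thesis using \<open>ys = a # as\<close> h pe_append[of xs as] by auto
  qed
qed simp

lemma pos_prop: "distinct C \<Longrightarrow> u \<in> set C \<Longrightarrow> pos C u < length C \<and> C ! pos C u = u"
  unfolding pos_def using distinct_Ex1[of C u] by (rule theI')

definition arc :: "'a list \<Rightarrow> 'a \<Rightarrow> 'a \<Rightarrow> 'a list" where
  "arc C u v = take (nat (cyc_dist C u v) + 1) (rotate (pos C u) C)"

lemma arc_props:
  assumes "distinct C" "u \<in> set C" "v \<in> set C" "u \<noteq> v"
  shows "distinct (arc C u v)" "hd (arc C u v) = u" "last (arc C u v) = v"
    "set (arc C u v) \<subseteq> set C" "path_edges (arc C u v) \<subseteq> cycle_edges C"
    "length (arc C u v) = nat (cyc_dist C u v) + 1"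
proof -
  define L where "L = length C"
  define k where "k = nat (cyc_dist C u v)"
  have pu: "pos C u < L" "C ! pos C u = u" using pos_prop[OF assms(1,2)] L_def by auto
  have pv: "pos C v < L" "C ! pos C v = v" using pos_prop[OF assms(1,3)] L_def by auto
  have L0: "L > 0" using pu by simp
  have kd: "int k = (int (pos C v) - int (pos C u)) mod int L"
    unfolding k_def cyc_dist_def L_def using L0 L_def by simp
  have kL: "k < L" using kd L0 by (metis of_nat_less_iff pos_mod_bound of_nat_0_less_iff)
  have "int ((pos C u + k) mod L) = (int (pos C u) + int k) mod int L" by (simp add: zmod_int)
  also have "\<dots> = (int (pos C u) + (int (pos C v) - int (pos C u))) mod int L"
    using kd by (simp add: mod_add_right_eq)
  also have "\<dots> = int (pos C v)" using pv(1) by simp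
  finally have pk: "(pos C u + k) mod L = pos C v" by simp
  have k0: "k \<noteq> 0"
  proof
    assume "k = 0"
    then have "pos C u = pos C v" using pk pu by simp
    then show False using pu pv assms(4) by metis
  qed
  let ?R = "rotate (pos C u) C"
  have lenR: "length ?R = L" using L_def by simp
  have a: "arc C u v = take (k+1) ?R" unfolding arc_def k_def by simp
  show "distinct (arc C u v)" using a assms(1) by simp
  show "length (arc C u v) = nat (cyc_dist C u v) + 1" using a kL lenR k_def by simp
  have "?R ! 0 = u" using nth_rotate[of 0 C "pos C u"] pu L0 L_def by simp
  moreover have "?R \<noteq> []" using lenR L0 by auto
  ultimately show "hd (arc C u v) = u" using a by (cases ?R) auto
  have "?R ! k = v" using nth_rotate[of k C "pos C u"] pk pv kL L_def by simp
  moreover have "length (take (Suc k) ?R) = Suc k" using kL lenR by simp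
  moreover have "last (take (Suc k) ?R) = take (Suc k) ?R ! (length (take (Suc k) ?R) - 1)"
    using kL lenR by (intro last_conv_nth) auto
  ultimately show "last (arc C u v) = v" using a kL lenR by simp
  show "set (arc C u v) \<subseteq> set C" using a by (metis set_rotate set_take_subset)
  show "path_edges (arc C u v) \<subseteq> cycle_edges C"
    using a pe_take[of "k+1" ?R] pe_sub_ce[of ?R] ce_rotate[of "pos C u" C] by auto
qed

lemma pft_inter:
  assumes "path_from_to E P X Y" "X \<inter> Y = {}"
  shows "set P \<inter> X = {hd P}" "set P \<inter> Y = {last P}" "length P \<ge> 2"
    "is_path E P"
proof -
  have p: "is_path E P" "hd P \<in> X" "last P \<in> Y"
    "\<And>i. 0 < i \<Longrightarrow> i < length P - 1 \<Longrightarrow> P ! i \<notin> X \<union> Y"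
    using assms(1) unfolding path_from_to_def by auto
  show "is_path E P" by fact
  have ne: "P \<noteq> []" using p(1) by (simp add: is_path_def)
  have "hd P \<noteq> last P" using p(2,3) assms(2) by auto
  then show "length P \<ge> 2" using ne
    by (cases P; cases "tl P") auto
  have mem: "z = hd P \<or> z = last P \<or> z \<notin> X \<union> Y" if zP: "z \<in> set P" for z
  proof -
    obtain i where i: "i < length P" "P ! i = z" using zP by (meson in_set_conv_nth)
    show ?thesis
    proof (cases "i = 0")
      case True then show ?thesis using i ne by (simp add: hd_conv_nth)
    next
      case False
      show ?thesis
      proof (cases "i = length P - 1")
        case True then show ?thesis using i ne by (simp add: last_conv_nth)
      next
        case f2: False
        then show ?thesis using p(4)[of i] False i by auto
      qed
    qed
  qed
  show "set P \<inter> X = {hd P}" using mem p(2,3) assms(2) ne by auto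
  show "set P \<inter> Y = {last P}" using mem p(2,3) assms(2) ne by auto
qed

lemma pe_Cons: "ys \<noteq> [] \<Longrightarrow> path_edges (x # ys) = insert {x, hd ys} (path_edges ys)"
  by (cases ys) auto

lemma len2: "xs \<noteq> [] \<Longrightarrow> hd xs \<noteq> last xs \<Longrightarrow> length xs \<ge> 2"
  by (cases xs; cases "tl xs") auto

lemma close_cycle:
  assumes "W \<noteq> []" "distinct W" "distinct R" "length R \<ge> 2" "hd R = last W" "last R = hd W"
    "set W \<inter> set R = {hd W, last W}"
  shows "distinct (W @ butlast (tl R))"
    "cycle_edges (W @ butlast (tl R)) = path_edges W \<union> path_edges R"
    "length (W @ butlast (tl R)) = length W + length R - 2"
proof -
  obtain a R' where aR: "R = a # R'" using assms(4) by (cases R) auto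
  have "R' \<noteq> []" using assms(4) aR by auto
  then obtain M b where "R' = M @ [b]" by (metis append_butlast_last_id)
  then have R: "R = a # M @ [b]" using aR by simp
  have ab: "a = last W" "b = hd W" using R assms(5,6) by auto
  have bt: "butlast (tl R) = M" using R by simp
  have "set M \<inter> set W = {}"
  proof -
    have "a \<notin> set M" "b \<notin> set M" using assms(3) R by auto
    note nm = this
    have "x \<notin> set W" if xM: "x \<in> set M" for x
    proof
      assume "x \<in> set W"
      moreover have "x \<in> set R" using xM R by simp
      ultimately have "x \<in> {hd W, last W}" using assms(7) by blast
      then show False using nm ab xM by auto
    qed
    then show ?thesis by blast
  qed
  then show "distinct (W @ butlast (tl R))" using bt assms(2,3) R by auto
  show "length (W @ butlast (tl R)) = length W + length R - 2" using bt R by simp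
  show "cycle_edges (W @ butlast (tl R)) = path_edges W \<union> path_edges R"
  proof (cases "M = []")
    case True
    then show ?thesis using bt R ab by (auto simp: cycle_edges_def)
  next
    case False
    have "path_edges R = insert {a, hd M} (path_edges M \<union> {{last M, b}})"
      using R False pe_Cons[of "M @ [b]" a] pe_append[of M "[b]"] by simp
    moreover have "cycle_edges (W @ M) = path_edges W \<union> path_edges M \<union> {{last W, hd M}} \<union> {{last M, hd W}}"
      using False assms(1) pe_append[of W M] by (simp add: cycle_edges_def)
    ultimately show ?thesis using bt ab by auto
  qed
qed

lemma core:
  assumes C12: "distinct C1" "distinct C2" "set C1 \<inter> set C2 = {}"
    and P1: "path_from_to E P1 (set C1) (set C2)" and P2: "path_from_to E P2 (set C1) (set C2)"
    and P12: "set P1 \<inter> set P2 = {}"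
    and A1: "distinct A1" "hd A1 = hd P2" "last A1 = hd P1" "set A1 \<subseteq> set C1"
       "path_edges A1 \<subseteq> cycle_edges C1" "A1 \<noteq> []"
    and A2: "distinct A2" "hd A2 = last P1" "last A2 = last P2" "set A2 \<subseteq> set C2"
       "path_edges A2 \<subseteq> cycle_edges C2" "A2 \<noteq> []"
  shows "\<exists>D. is_cycle (cycle_edges C1 \<union> cycle_edges C2 \<union> path_edges P1 \<union> path_edges P2) D
     \<and> length D = length A1 + length A2 + length P1 + length P2 - 4"
proof -
  note i1 = pft_inter[OF P1 C12(3)] and i2 = pft_inter[OF P2 C12(3)]
  have dP1: "distinct P1" "P1 \<noteq> []" using i1(4) by (auto simp: is_path_def)
  have dP2: "distinct P2" "P2 \<noteq> []" using i2(4) by (auto simp: is_path_def)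
  have P1c: "P1 = hd P1 # tl P1" "tl P1 \<noteq> []" using dP1 i1(3) by (cases P1; auto)+
  have P2c: "P2 = hd P2 # tl P2" using dP2 by simp
  have hdP1: "hd P1 \<in> set C1" and lP1: "last P1 \<in> set C2" using i1 by auto
  have hdP2: "hd P2 \<in> set C1" and lP2: "last P2 \<in> set C2" using i2 by auto
  have A2c: "A2 = hd A2 # tl A2" "tl A2 \<noteq> []"
  proof -
    show "A2 = hd A2 # tl A2" using A2(6) by simp
    have "hd A2 \<noteq> last A2"
    proof
      assume "hd A2 = last A2"
      then have "last P1 = last P2" using A2 by simp
      then show False using P12 dP1 dP2 by (metis disjoint_iff last_in_set)
    qed
    then show "tl A2 \<noteq> []" using A2(6) by (cases A2) auto
  qed
  have A1l: "length A1 \<ge> 1" using A1(6) by (cases A1) auto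
  define W1 where "W1 = A1 @ tl P1"
  have nP1: "hd P1 \<notin> set (tl P1)" using dP1 P1c by (metis distinct.simps(2))
  have tl1: "set P1 = insert (hd P1) (set (tl P1))" using dP1 by (cases P1) auto
  have x1A: "hd P1 \<in> set A1" using A1(3,6) by (metis last_in_set)
  have "set A1 \<inter> set (tl P1) = {}"
  proof (rule ccontr)
    assume "set A1 \<inter> set (tl P1) \<noteq> {}"
    then obtain z where z: "z \<in> set A1" "z \<in> set (tl P1)" by blast
    then have "z \<in> set P1 \<inter> set C1" using A1(4) tl1 by auto
    then have "z = hd P1" using i1(1) by simp
    then show False using z nP1 by simp
  qed
  then have dW1: "distinct W1" unfolding W1_def using A1(1) dP1 by (simp add: distinct_tl)
  have sW1: "set W1 = set A1 \<union> set P1" unfolding W1_def using tl1 x1A by auto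
  have ltl1: "last (tl P1) = last P1" using P1c by (cases P1) auto
  have hW1: "hd W1 = hd P2" "last W1 = last P1" unfolding W1_def using A1(2,6) P1c(2) ltl1 by auto
  have peW1: "path_edges W1 = path_edges A1 \<union> path_edges P1"
    unfolding W1_def using pe_join[of P1 A1] A1 dP1 by simp
  have lW1: "length W1 = length A1 + length P1 - 1" unfolding W1_def using dP1 A1l by (cases P1) auto
  define W where "W = W1 @ tl A2"
  have nA2: "hd A2 \<notin> set (tl A2)" using A2(1) A2c by (metis distinct.simps(2))
  have tl2: "set A2 = insert (hd A2) (set (tl A2))" using A2(6) by (cases A2) auto
  have "set W1 \<inter> set A2 \<subseteq> {hd A2}"
    using sW1 A1(4) A2(4) C12(3) i1(2) A2(2) by auto
  then have "set W1 \<inter> set (tl A2) = {}" using tl2 nA2 by auto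
  then have dW: "distinct W" unfolding W_def using dW1 A2(1) by (simp add: distinct_tl)
  have y1: "hd A2 \<in> set W1" using sW1 A2(2) dP1 by simp
  have sW: "set W = set A1 \<union> set P1 \<union> set A2" unfolding W_def using sW1 tl2 y1 by auto
  have ltl2: "last (tl A2) = last A2" using A2c by (cases A2) auto
  have hW: "hd W = hd P2" "last W = last P2" unfolding W_def W1_def using A1(2,6) A2c(2) ltl2 A2(3) by auto
  have peW: "path_edges W = path_edges A1 \<union> path_edges P1 \<union> path_edges A2"
    unfolding W_def using pe_join[of A2 W1] A2 hW1 peW1 W1_def A1(6) by auto
  have lW: "length W = length W1 + length A2 - 1" unfolding W_def using A2c by (cases A2) auto
  define R where "R = rev P2"
  have hR: "hd R = last W" "last R = hd W" unfolding R_def using hW dP2 by (auto simp: hd_rev last_rev)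
  have sWR: "set W \<inter> set R = {hd W, last W}"
  proof -
    have "set A1 \<inter> set P2 \<subseteq> {hd P2}" using A1(4) i2(1) by auto
    moreover have "set A2 \<inter> set P2 \<subseteq> {last P2}" using A2(4) i2(2) by auto
    moreover have "hd P2 \<in> set A1" using A1(2,6) by (metis list.set_sel(1))
    moreover have "last P2 \<in> set A2" using A2(3,6) by (metis last_in_set)
    moreover have "hd P2 \<in> set P2" "last P2 \<in> set P2" using dP2 by auto
    ultimately show ?thesis unfolding R_def using sW hW P12 by auto
  qed
  have lR: "length R \<ge> 2" unfolding R_def using i2(3) by simp
  have Wne: "W \<noteq> []" unfolding W_def W1_def using A1(6) by simp
  note cc = close_cycle[OF Wne dW _ lR hR sWR]
  define D where "D = W @ butlast (tl R)"
  have dR: "distinct R" unfolding R_def using dP2 by simp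
  have lA2: "length A2 \<ge> 2" using A2c by (cases A2; cases "tl A2") auto
  have lA1: "length A1 \<ge> 1" by fact
  have "length D = length A1 + length A2 + length P1 + length P2 - 4"
    unfolding D_def using cc(3)[OF dR] lW lW1 R_def i1(3) i2(3) lA2 lA1 by simp
  moreover have "length D \<ge> 3"
    unfolding D_def using cc(3)[OF dR] lW lW1 R_def i1(3) i2(3) lA2 lA1 by simp
  moreover have "distinct D" unfolding D_def using cc(1)[OF dR] .
  moreover have "cycle_edges D \<subseteq> cycle_edges C1 \<union> cycle_edges C2 \<union> path_edges P1 \<union> path_edges P2"
    unfolding D_def using cc(2)[OF dR] peW R_def A1(5) A2(5) by auto
  ultimately show ?thesis unfolding is_cycle_def by blast
qed

lemma three: "(x::nat) < 3 \<Longrightarrow> x = 0 \<or> x = 1 \<or> x = 2" by auto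
lemma ar0: fixes A B C D S :: nat
  assumes "A < 3" "B < 3" "C < 3" "D < 3" "S < 3" "A \<noteq> B" "C \<noteq> D"
  shows "(A + C + S) mod 3 = 1 \<or> (A + D + S) mod 3 = 1 \<or> (B + C + S) mod 3 = 1 \<or> (B + D + S) mod 3 = 1"
  using three[OF assms(1)] three[OF assms(2)] three[OF assms(3)] three[OF assms(4)] three[OF assms(5)] assms(6,7)
  by (elim disjE) simp_all
lemma e1: "((x::nat) + y + z) mod 3 = (x mod 3 + y mod 3 + z mod 3) mod 3"
proof -
  have h: "(x + y) mod 3 = (x mod 3 + y mod 3) mod 3" by (rule mod_add_eq[symmetric])
  have "(x + y + z) mod 3 = ((x + y) mod 3 + z mod 3) mod 3" by (rule mod_add_eq[symmetric])
  also have "\<dots> = ((x mod 3 + y mod 3) mod 3 + z mod 3) mod 3" by (simp only: h)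
  also have "\<dots> = (x mod 3 + y mod 3 + z mod 3) mod 3" by (rule mod_add_left_eq)
  finally show ?thesis .
qed

lemma ar: fixes a b c d s :: nat
  assumes "a mod 3 \<noteq> b mod 3" "c mod 3 \<noteq> d mod 3"
  shows "(a + c + s) mod 3 = 1 \<or> (a + d + s) mod 3 = 1 \<or> (b + c + s) mod 3 = 1 \<or> (b + d + s) mod 3 = 1"
proof -
  have "(a mod 3 + c mod 3 + s mod 3) mod 3 = 1 \<or> (a mod 3 + d mod 3 + s mod 3) mod 3 = 1 \<or>
     (b mod 3 + c mod 3 + s mod 3) mod 3 = 1 \<or> (b mod 3 + d mod 3 + s mod 3) mod 3 = 1"
    using ar0[of "a mod 3" "b mod 3" "c mod 3" "d mod 3" "s mod 3"] assms by simp
  then show ?thesis by (simp only: e1[symmetric])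
qed

theorem lemma2p4:
  fixes E :: "'a set set" and C1 C2 P1 P2 :: "'a list" and x1 x2 y1 y2 :: 'a
  assumes "simple_graph E"
    and "is_cycle E C1" and "is_cycle E C2" and "set C1 \<inter> set C2 = {}"
    and "path_from_to E P1 (set C1) (set C2)" and "path_from_to E P2 (set C1) (set C2)"
    and "set P1 \<inter> set P2 = {}"
    and "hd P1 = x1" and "last P1 = y1" and "hd P2 = x2" and "last P2 = y2"
    and "mod_non_diagonal C1 x1 x2" and "mod_non_diagonal C2 y1 y2"
  shows "\<exists>D. is_cycle (cycle_edges C1 \<union> cycle_edges C2 \<union> path_edges P1 \<union> path_edges P2) D
             \<and> length D mod 3 = 1"
proof -
  let ?G = "cycle_edges C1 \<union> cycle_edges C2 \<union> path_edges P1 \<union> path_edges P2"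
  have dC: "distinct C1" "distinct C2" using assms(2,3) by (auto simp: is_cycle_def)
  have m1: "x1 \<in> set C1" "x2 \<in> set C1" "x1 \<noteq> x2"
    "cyc_dist C1 x1 x2 mod 3 \<noteq> cyc_dist C1 x2 x1 mod 3"
    using assms(12) by (auto simp: mod_non_diagonal_def)
  have m2: "y1 \<in> set C2" "y2 \<in> set C2" "y1 \<noteq> y2"
    "cyc_dist C2 y1 y2 mod 3 \<noteq> cyc_dist C2 y2 y1 mod 3"
    using assms(13) by (auto simp: mod_non_diagonal_def)
  have l1: "length P1 \<ge> 2" using pft_inter(3)[OF assms(5,4)] .
  have l2: "length P2 \<ge> 2" using pft_inter(3)[OF assms(6,4)] .
  note a12 = arc_props[OF dC(1) m1(2,1) m1(3)[symmetric]]
  note a21 = arc_props[OF dC(1) m1(1,2,3)]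
  note b12 = arc_props[OF dC(2) m2(1,2,3)]
  note b21 = arc_props[OF dC(2) m2(2,1) m2(3)[symmetric]]
  have A1s: "\<And>A1. A1 \<in> {arc C1 x2 x1, rev (arc C1 x1 x2)} \<Longrightarrow>
     distinct A1 \<and> hd A1 = hd P2 \<and> last A1 = hd P1 \<and> set A1 \<subseteq> set C1 \<and>
       path_edges A1 \<subseteq> cycle_edges C1 \<and> A1 \<noteq> []"
    using a12 a21 assms(8,10) by (auto simp: hd_rev last_rev)
  have A2s: "\<And>A2. A2 \<in> {arc C2 y1 y2, rev (arc C2 y2 y1)} \<Longrightarrow>
     distinct A2 \<and> hd A2 = last P1 \<and> last A2 = last P2 \<and> set A2 \<subseteq> set C2 \<and>
       path_edges A2 \<subseteq> cycle_edges C2 \<and> A2 \<noteq> []"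
    using b12 b21 assms(9,11) by (auto simp: hd_rev last_rev)
  have ex: "\<exists>D. is_cycle ?G D \<and> length D = length A1 + length A2 + length P1 + length P2 - 4"
    if "A1 \<in> {arc C1 x2 x1, rev (arc C1 x1 x2)}" "A2 \<in> {arc C2 y1 y2, rev (arc C2 y2 y1)}"
    for A1 A2
    using core[OF dC assms(4,5,6,7)] A1s[OF that(1)] A2s[OF that(2)] by blast
  define a where "a = nat (cyc_dist C1 x2 x1)"
  define b where "b = nat (cyc_dist C1 x1 x2)"
  define c where "c = nat (cyc_dist C2 y1 y2)"
  define d where "d = nat (cyc_dist C2 y2 y1)"
  have Lpos: "length C1 > 0" "length C2 > 0" using m1 m2 by (auto simp: length_pos_if_in_set)
  have ge: "cyc_dist C1 x2 x1 \<ge> 0" "cyc_dist C1 x1 x2 \<ge> 0" "cyc_dist C2 y1 y2 \<ge> 0"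
     "cyc_dist C2 y2 y1 \<ge> 0" using Lpos unfolding cyc_dist_def by simp_all
  have ab: "a mod 3 \<noteq> b mod 3"
  proof
    assume "a mod 3 = b mod 3"
    then have "int (a mod 3) = int (b mod 3)" by simp
    then have h: "int a mod 3 = int b mod 3" by (simp add: zmod_int)
    have "int a = cyc_dist C1 x2 x1" "int b = cyc_dist C1 x1 x2" unfolding a_def b_def using ge by simp_all
    then show False using m1(4) h by simp
  qed
  have cd: "c mod 3 \<noteq> d mod 3"
  proof
    assume "c mod 3 = d mod 3"
    then have "int (c mod 3) = int (d mod 3)" by simp
    then have h: "int c mod 3 = int d mod 3" by (simp add: zmod_int)
    have "int c = cyc_dist C2 y1 y2" "int d = cyc_dist C2 y2 y1" unfolding c_def d_def using ge by simp_all
    then show False using m2(4) h by simp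
  qed
  have len: "length (arc C1 x2 x1) = a + 1" "length (rev (arc C1 x1 x2)) = b + 1"
    "length (arc C2 y1 y2) = c + 1" "length (rev (arc C2 y2 y1)) = d + 1"
    using a12 a21 b12 b21 a_def b_def c_def d_def by simp_all
  define p where "p = length P1 + length P2"
  have p4: "p \<ge> 4" using l1 l2 p_def by simp
  have arith: "(a + c + (p - 2)) mod 3 = 1 \<or> (a + d + (p - 2)) mod 3 = 1 \<or>
     (b + c + (p - 2)) mod 3 = 1 \<or> (b + d + (p - 2)) mod 3 = 1"
    using ar[OF ab cd] .
  show ?thesis
  proof -
    { fix A1 A2 n1 n2
      assume h: "A1 \<in> {arc C1 x2 x1, rev (arc C1 x1 x2)}" "A2 \<in> {arc C2 y1 y2, rev (arc C2 y2 y1)}"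
        "length A1 = n1 + 1" "length A2 = n2 + 1" "(n1 + n2 + (p - 2)) mod 3 = 1"
      obtain D where "is_cycle ?G D" "length D = length A1 + length A2 + length P1 + length P2 - 4"
        using ex[OF h(1,2)] by blast
      moreover have "length A1 + length A2 + length P1 + length P2 - 4 = n1 + n2 + (p - 2)"
        using h(3,4) p_def p4 by simp
      ultimately have ?thesis using h(5) by auto }
    then show ?thesis using arith len by blast
  qed
qed

end
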